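(* For all $n\ge k\ge1$, $$\mathbf{Sf}_{n,k}(p,q)\big|_{p^0}=q^{n-k}\begin{bmatrix} n-1\\ k-1\end{bmatrix}_q,$$ and for all $n>k\ge3$, $$\mathbf{Sf}_{n,k}(p,q)\big|_{p}=q^{n-k}\sum_{s=1}^{k-2}s\,q^{s-1}\sum_{i=0}^{n-k-1}q^{i(s+1)}\begin{bmatrix} i+k-s-2\\ i\end{bmatrix}_q\begin{bmatrix} s+n-k-i\\ s+1\end{bmatrix}_q.$$
   Context: $F_1(p,q)=q$, $F_2(p,q)=q^2$ and $F_m(p,q)=qF_{m-1}(p,q)+pF_{m-2}(p,q)$ for $m\ge3$. Let $(x)_{\downarrow_{F,p,q,0}}=1$ and $(x)_{\downarrow_{F,p,q,k}}=x(x-F_1(p,q))\cdots(x-F_{k-1}(p,q))$ for $k\ge1$. Define $\mathbf{Sf}_{n,k}(p,q)$ for $0\le k\le n$ by $x^n=\sum_{k=0}^n\mathbf{Sf}_{n,k}(p,q)(x)_{\downarrow_{F,p,q,k}}$; it is a polynomial in $p,q$. For a polynomial $f$ in $p$ (with coefficients polynomials in $q$), $f|_{p^s}$ denotes the coefficient of $p^s$. $[m]_q=1+q+\cdots+q^{m-1}$, $[m]_q!=[m]_q[m-1]_q\cdots[1]_q$ with $[0]_q!=1$, and $\begin{bmatrix} n\\ k\end{bmatrix}_q=\frac{[n]_q!}{[k]_q![n-k]_q!}$. *)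

theory Defs
  imports "HOL-Computational_Algebra.Polynomial"
begin

(* Polynomials in p with coefficients polynomials in q:  int poly poly.
   Outer variable = p, inner variable = q. *)

definition qv :: "int poly" where "qv = [:0, 1:]"
definition Qc :: "int poly poly" where "Qc = [:qv:]"
definition Pv :: "int poly poly" where "Pv = [:0, 1:]"

fun Fpq :: "nat \<Rightarrow> int poly poly" where
  "Fpq 0 = 0"
| "Fpq (Suc 0) = Qc"
| "Fpq (Suc (Suc 0)) = Qc ^ 2"
| "Fpq (Suc (Suc (Suc m))) = Qc * Fpq (Suc (Suc m)) + Pv * Fpq (Suc m)"

(* (x)_{F,p,q,k} as a polynomial in x over Z[q][p] *)
definition fall :: "nat \<Rightarrow> int poly poly poly" where
  "fall k = (if k = 0 then 1 else [:0, 1:] * (\<Prod>i\<in>{1..<k}. [:- Fpq i, 1:]))"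

definition Sf :: "nat \<Rightarrow> nat \<Rightarrow> int poly poly" where
  "Sf n k = (THE c. (\<forall>j>n. c j = 0) \<and>
                    monom 1 n = (\<Sum>j\<le>n. smult (c j) (fall j))) k"

definition qint :: "nat \<Rightarrow> int poly" where
  "qint m = (\<Sum>i<m. qv ^ i)"

definition qfact :: "nat \<Rightarrow> int poly" where
  "qfact m = (\<Prod>i\<in>{1..m}. qint i)"

definition qbinom :: "nat \<Rightarrow> nat \<Rightarrow> int poly" where
  "qbinom n k = qfact n div (qfact k * qfact (n - k))"

end

theory Submission
  imports Defs "HOL-Computational_Algebra.Formal_Power_Series"
begin

fun gb :: "nat \<Rightarrow> nat \<Rightarrow> int poly" where
  "gb n 0 = 1"
| "gb 0 (Suc k) = 0"
| "gb (Suc n) (Suc k) = gb n k + qv ^ Suc k * gb n (Suc k)"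

lemma gb_zero: "n < k \<Longrightarrow> gb n k = 0"
  by (induction n k rule: gb.induct) auto

lemma gb_diag: "gb n n = 1"
  by (induction n) (auto simp: gb_zero)

lemma qint_0[simp]: "qint 0 = 0" by (simp add: qint_def)
lemma qfact_0[simp]: "qfact 0 = 1" by (simp add: qfact_def)

lemma qint_Suc: "qint (Suc m) = qint m + qv ^ m"
  by (simp add: qint_def)

lemma qint_add: "qint (a + b) = qint a + qv ^ a * qint b"
  by (induction b) (auto simp: qint_Suc power_add algebra_simps)

lemma qfact_Suc: "qfact (Suc m) = qfact m * qint (Suc m)"
  by (simp add: qfact_def prod.cl_ivl_Suc)

lemma qint_nz: "m \<ge> 1 \<Longrightarrow> qint m \<noteq> 0"
proof
  assume "m \<ge> 1" "qint m = 0"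
  have "poly (qint m) 1 = of_nat m" by (simp add: qint_def poly_sum qv_def)
  with \<open>qint m = 0\<close> \<open>m \<ge> 1\<close> show False by simp
qed

lemma qfact_nz: "qfact m \<noteq> 0"
  unfolding qfact_def using qint_nz by (simp add: prod_zero_iff)

lemma gb_fact: "k \<le> n \<Longrightarrow> gb n k * qfact k * qfact (n - k) = qfact n"
proof (induction n arbitrary: k)
  case 0 then show ?case by (simp add: qfact_def)
next
  case (Suc n)
  show ?case
  proof (cases k)
    case 0 then show ?thesis by simp
  next
    case (Suc j)
    with Suc.prems have jn: "j \<le> n" by simp
    have t1: "gb n j * qfact (Suc j) * qfact (n - j) = qfact n * qint (Suc j)"
      using Suc.IH[OF jn] by (simp add: qfact_Suc algebra_simps)
    have t2: "gb n (Suc j) * qfact (Suc j) * qfact (n - j) = qfact n * qint (n - j)"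
    proof (cases "j = n")
      case True then show ?thesis by (simp add: gb_zero qint_def)
    next
      case False
      then have "Suc j \<le> n" using jn by simp
      moreover have "n - j = Suc (n - Suc j)" using False jn by simp
      ultimately show ?thesis using Suc.IH[of "Suc j"] by (simp add: qfact_Suc algebra_simps)
    qed
    have qs: "qint (Suc n) = qint (Suc j) + qv ^ Suc j * qint (n - j)"
      using qint_add[of "Suc j" "n - j"] jn by simp
    have "gb (Suc n) k * qfact k * qfact (Suc n - k)
        = gb n j * qfact (Suc j) * qfact (n - j) + qv ^ Suc j * (gb n (Suc j) * qfact (Suc j) * qfact (n - j))"
      using \<open>k = Suc j\<close> by (simp add: algebra_simps)
    also have "\<dots> = qfact n * qint (Suc n)" using t1 t2 qs by (simp add: algebra_simps)
    finally show ?thesis by (simp add: qfact_Suc)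
  qed
qed

lemma qbinom_gb: "k \<le> n \<Longrightarrow> qbinom n k = gb n k"
proof -
  assume "k \<le> n"
  then have "qfact n = gb n k * (qfact k * qfact (n - k))" using gb_fact by (simp add: mult.assoc)
  then show ?thesis unfolding qbinom_def using qfact_nz by simp
qed

lemma gb_sym: "gb (a + b) a = gb (a + b) b"
proof -
  have "gb (a + b) a * (qfact a * qfact b) = gb (a + b) b * (qfact a * qfact b)"
    using gb_fact[of a "a+b"] gb_fact[of b "a+b"] by (simp add: algebra_simps)
  then show ?thesis using qfact_nz by simp
qed

definition Gs :: "int poly \<Rightarrow> int poly fps" where "Gs x = Abs_fps (\<lambda>i. x ^ i)"

fun hf :: "int poly list \<Rightarrow> int poly fps" where
  "hf [] = 1" | "hf (x # xs) = Gs x * hf xs"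

lemma hf_append: "hf (xs @ ys) = hf xs * hf ys"
  by (induction xs) (auto simp: mult.assoc)

lemma hf_0: "fps_nth (hf xs) 0 = 1"
  by (induction xs) (auto simp: Gs_def)

lemma Gs_rec: "Gs x = 1 + fps_const x * (fps_X * Gs x)"
proof (rule fps_ext)
  fix n show "fps_nth (Gs x) n = fps_nth (1 + fps_const x * (fps_X * Gs x)) n"
    by (cases n) (auto simp: Gs_def fps_X_mult_nth)
qed

lemma hf_rec: "fps_nth (hf (x # xs)) (Suc N) = fps_nth (hf xs) (Suc N) + x * fps_nth (hf (x # xs)) N"
proof -
  have "hf (x # xs) = hf xs + fps_const x * (fps_X * hf (x # xs))"
    by (simp, subst Gs_rec) (simp add: algebra_simps)
  then have "fps_nth (hf (x # xs)) (Suc N) = fps_nth (hf xs + fps_const x * (fps_X * hf (x # xs))) (Suc N)" by simp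
  also have "\<dots> = fps_nth (hf xs) (Suc N) + x * fps_nth (hf (x # xs)) N" by (simp add: fps_X_mult_nth)
  finally show ?thesis .
qed

fun Rg :: "nat \<Rightarrow> nat \<Rightarrow> int poly list" where
  "Rg a 0 = []" | "Rg a (Suc m) = qv ^ (a + m) # Rg a m"

lemma Rg_add: "Rg a (m1 + m2) = Rg (a + m1) m2 @ Rg a m1"
  by (induction m2) (auto simp: algebra_simps)

lemma hf_Rg: "fps_nth (hf (Rg a (Suc m))) i = qv ^ (a * i) * gb (i + m) m"
proof (induction m arbitrary: i)
  case 0 then show ?case by (simp add: Gs_def power_mult)
next
  case (Suc m)
  show ?case
  proof (induction i)
    case 0 then show ?case by (simp del: hf.simps Rg.simps add: hf_0 gb_diag)
  next
    case (Suc i)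
    have "fps_nth (hf (Rg a (Suc (Suc m)))) (Suc i)
       = fps_nth (hf (Rg a (Suc m))) (Suc i) + qv ^ (a + Suc m) * fps_nth (hf (Rg a (Suc (Suc m)))) i"
      by (simp only: Rg.simps(2)[of a "Suc m"] hf_rec)
    also have "\<dots> = qv ^ (a * Suc i) * gb (i + Suc m) m + qv ^ (a + Suc m) * (qv ^ (a * i) * gb (i + Suc m) (Suc m))"
      using Suc.IH \<open>\<And>i. fps_nth (hf (Rg a (Suc m))) i = qv ^ (a * i) * gb (i + m) m\<close>[of "Suc i"] by simp
    also have "\<dots> = qv ^ (a * Suc i) * gb (Suc i + Suc m) (Suc m)"
      by (simp add: power_add algebra_simps)
    finally show ?case .
  qed
qed

lemma Fpq_coeff: "m \<ge> 1 \<Longrightarrow> coeff (Fpq m) 0 = qv ^ m \<and> coeff (Fpq m) 1 = of_nat (m - 2) * qv ^ (m - 2)"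
proof (induction m rule: Fpq.induct)
  case 1 then show ?case by simp
next
  case 2 then show ?case by (simp add: Qc_def)
next
  case 3 then show ?case by (simp add: Qc_def power2_eq_square)
next
  case (4 m)
  then have i1: "coeff (Fpq (Suc (Suc m))) 0 = qv ^ Suc (Suc m)"
       "coeff (Fpq (Suc (Suc m))) 1 = of_nat m * qv ^ m"
       and i2: "coeff (Fpq (Suc m)) 0 = qv ^ Suc m" by auto
  have "Fpq (Suc (Suc (Suc m))) = smult qv (Fpq (Suc (Suc m))) + pCons 0 (Fpq (Suc m))"
    by (simp add: Qc_def Pv_def)
  then show ?case using i1 i2 by (simp add: coeff_pCons algebra_simps)
qed

lemma fall_Suc: "fall (Suc j) = fall j * [:- Fpq j, 1:]"
  by (cases j) (auto simp: fall_def prod.op_ivl_Suc mult.assoc)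

lemma fall_deg: "degree (fall j) = j \<and> coeff (fall j) j = 1"
proof (induction j)
  case 0 then show ?case by (simp add: fall_def)
next
  case (Suc j)
  then have nz: "fall j \<noteq> 0" by auto
  have "degree (fall (Suc j)) = Suc j" unfolding fall_Suc using nz Suc
    by (subst degree_mult_eq) auto
  moreover have "coeff (fall (Suc j)) (Suc j) = 1" unfolding fall_Suc
    using coeff_mult_degree_sum[of "fall j" "[:- Fpq j, 1:]"] Suc by simp
  ultimately show ?case by simp
qed

lemma x_fall: "[:0, 1:] * fall j = fall (Suc j) + smult (Fpq j) (fall j)"
proof -
  have "[:0, 1:] = [:- Fpq j, 1:] + [:Fpq j:]" by simp
  then show ?thesis by (simp add: fall_Suc algebra_simps)
qed

fun cc :: "nat \<Rightarrow> nat \<Rightarrow> int poly poly" where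
  "cc 0 k = (if k = 0 then 1 else 0)"
| "cc (Suc n) 0 = 0"
| "cc (Suc n) (Suc k) = cc n k + Fpq (Suc k) * cc n (Suc k)"

lemma cc_zero: "n < k \<Longrightarrow> cc n k = 0"
  by (induction n k rule: cc.induct) auto

lemma cc_expand: "monom 1 n = (\<Sum>j\<le>n. smult (cc n j) (fall j))"
proof (induction n)
  case 0 show ?case by (simp add: fall_def)
next
  case (Suc n)
  define g where "g j = smult (Fpq j * cc n j) (fall j)" for j
  have "monom 1 (Suc n) = [:0, 1:] * monom (1 :: int poly poly) n"
    by (simp add: monom_Suc)
  also have "\<dots> = (\<Sum>j\<le>n. smult (cc n j) ([:0, 1:] * fall j))"
    using Suc.IH by (simp add: sum_distrib_left mult_smult_right)
  also have "\<dots> = (\<Sum>j\<le>n. smult (cc n j) (fall (Suc j))) + (\<Sum>j\<le>n. g j)"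
  proof -
    have "smult (cc n j) ([:0, 1:] * fall j) = smult (cc n j) (fall (Suc j)) + g j" for j
      by (simp only: x_fall) (simp add: g_def smult_add_right mult.commute)
    then show ?thesis by (simp only: sum.distrib)
  qed
  also have "(\<Sum>j\<le>n. g j) = (\<Sum>j\<le>n. g (Suc j))"
  proof -
    have "(\<Sum>j\<le>Suc n. g j) = g 0 + (\<Sum>j\<le>n. g (Suc j))" by (rule sum.atMost_Suc_shift)
    moreover have "(\<Sum>j\<le>Suc n. g j) = (\<Sum>j\<le>n. g j) + g (Suc n)" by simp
    moreover have "g 0 = 0" "g (Suc n) = 0" by (auto simp: g_def cc_zero)
    ultimately show ?thesis by simp
  qed
  also have "(\<Sum>j\<le>n. smult (cc n j) (fall (Suc j))) + (\<Sum>j\<le>n. g (Suc j))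
      = (\<Sum>j\<le>Suc n. smult (cc (Suc n) j) (fall j))"
    by (simp only: sum.atMost_Suc_shift) (simp add: g_def smult_add_left sum.distrib)
  finally show ?case .
qed

lemma fall_indep: "(\<Sum>j\<le>n. smult (d j) (fall j)) = 0 \<Longrightarrow> \<forall>j\<le>n. d j = 0"
proof (induction n)
  case 0 then show ?case by (simp add: fall_def)
next
  case (Suc n)
  have deg: "degree (\<Sum>j\<le>n. smult (d j) (fall j)) \<le> n"
    by (rule degree_sum_le) (auto intro: order.trans[OF degree_smult_le] simp: fall_deg)
  have c1: "coeff (\<Sum>j\<le>Suc n. smult (d j) (fall j)) (Suc n) = d (Suc n)"
    using deg fall_deg[of "Suc n"] by (simp add: coeff_eq_0)
  then have dz: "d (Suc n) = 0" unfolding Suc.prems by simp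
  then have "(\<Sum>j\<le>n. smult (d j) (fall j)) = 0" using Suc.prems by simp
  then have "\<forall>j\<le>n. d j = 0" by (rule Suc.IH)
  then show ?case using dz le_Suc_eq by auto
qed

lemma Sf_cc: "Sf n k = cc n k"
proof -
  let ?P = "\<lambda>c. (\<forall>j>n. c j = 0) \<and> monom 1 n = (\<Sum>j\<le>n. smult (c j) (fall j))"
  have "?P (cc n)" using cc_zero cc_expand by auto
  moreover have "c = cc n" if "?P c" for c
  proof
    fix j
    have "(\<Sum>j\<le>n. smult (c j - cc n j) (fall j)) = 0"
      using that cc_expand[of n] by (simp add: smult_diff_left sum_subtractf)
    then have "\<forall>j\<le>n. c j - cc n j = 0" by (rule fall_indep)
    then show "c j = cc n j" using that cc_zero[of n j] by (cases "j \<le> n") auto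
  qed
  ultimately have "(THE c. ?P c) = cc n" by (rule the_equality)
  then show ?thesis unfolding Sf_def by simp
qed

lemma cc_coeff0: "coeff (cc (Suc n) (Suc k)) 0 = coeff (cc n k) 0 + qv ^ Suc k * coeff (cc n (Suc k)) 0"
  using Fpq_coeff[of "Suc k"] by (simp add: coeff_mult_0)

lemma cc_coeff1: "coeff (cc (Suc n) (Suc k)) 1 = coeff (cc n k) 1 + qv ^ Suc k * coeff (cc n (Suc k)) 1
   + of_nat (k - 1) * qv ^ (k - 1) * coeff (cc n (Suc k)) 0"
  using Fpq_coeff[of "Suc k"] by (simp add: coeff_mult algebra_simps)

lemma A_form: "coeff (cc n k) 0 = (if k \<le> n then fps_nth (hf (Rg 1 k)) (n - k) else 0)"
proof (induction n arbitrary: k)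
  case 0 then show ?case by simp
next
  case (Suc n)
  show ?case
  proof (cases k)
    case 0 then show ?thesis by simp
  next
    case (Suc j)
    show ?thesis
    proof (cases "j \<le> n")
      case False then show ?thesis using \<open>k = Suc j\<close> cc_zero by simp
    next
      case True
      show ?thesis
      proof (cases "n - j")
        case 0
        then have "j = n" using True by simp
        then show ?thesis using \<open>k = Suc j\<close> cc_coeff0[of n n] Suc.IH by (simp add: hf_0 del: hf.simps Rg.simps)
      next
        case (Suc M)
        then have e: "n - Suc j = M" "Suc j \<le> n" by auto
        have "fps_nth (hf (Rg 1 (Suc j))) (Suc M)
            = fps_nth (hf (Rg 1 j)) (Suc M) + qv ^ Suc j * fps_nth (hf (Rg 1 (Suc j))) M"
          by (simp only: Rg.simps(2)[of 1 j] hf_rec) simp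
        then show ?thesis using \<open>k = Suc j\<close> cc_coeff0[of n j] Suc.IH[of j] Suc.IH[of "Suc j"] e \<open>n - j = Suc M\<close> True
          by simp
      qed
    qed
  qed
qed

definition Gc :: "nat \<Rightarrow> int poly" where "Gc j = of_nat (j - 2) * qv ^ (j - 2)"

lemma B_form: "coeff (cc n k) 1 = (if k < n then (\<Sum>j=1..k. Gc j * fps_nth (hf (qv ^ j # Rg 1 k)) (n - k - 1)) else 0)"
proof (induction n arbitrary: k)
  case 0 then show ?case by simp
next
  case (Suc n)
  show ?case
  proof (cases k)
    case 0 then show ?thesis by simp
  next
    case (Suc j)
    show ?thesis
    proof (cases "j < n")
      case False then show ?thesis using \<open>k = Suc j\<close> cc_coeff1[of n j] Suc.IH[of j] Suc.IH[of "Suc j"]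
        A_form[of n "Suc j"] by simp
    next
      case True
      define M where "M = n - j - 1"
      define e where "e = (if M = 0 then 0 else qv ^ Suc j)"
      define Z where "Z i = fps_nth (hf (qv ^ i # Rg 1 (Suc j))) (M - 1)" for i
      have T1: "fps_nth (hf (qv ^ i # Rg 1 (Suc j))) M = fps_nth (hf (qv ^ i # Rg 1 j)) M + e * Z i" for i
      proof -
        have hh: "hf (qv ^ i # Rg 1 (Suc j)) = hf (qv ^ Suc j # qv ^ i # Rg 1 j)"
          by (simp add: mult.left_commute)
        show ?thesis
        proof (cases M)
          case 0 then show ?thesis by (simp add: e_def hf_0 del: hf.simps)
        next
          case (Suc M')
          show ?thesis unfolding hh Z_def e_def using Suc
            by (simp only: hf_rec) (simp del: hf.simps)
        qed
      qed
      have T2: "fps_nth (hf (qv ^ Suc j # Rg 1 (Suc j))) M = fps_nth (hf (Rg 1 (Suc j))) M + e * Z (Suc j)"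
      proof (cases M)
        case 0 then show ?thesis by (simp add: e_def hf_0 del: hf.simps)
      next
        case (Suc M')
        show ?thesis unfolding Z_def e_def using Suc
          by (simp only: hf_rec) (simp del: hf.simps)
      qed
      have B1: "coeff (cc n j) 1 = (\<Sum>i=1..j. Gc i * fps_nth (hf (qv ^ i # Rg 1 j)) M)"
        using Suc.IH[of j] True M_def by simp
      have B2: "qv ^ Suc j * coeff (cc n (Suc j)) 1 = e * (\<Sum>i=1..Suc j. Gc i * Z i)"
      proof (cases "M = 0")
        case True then show ?thesis using Suc.IH[of "Suc j"] M_def e_def by simp
      next
        case False
        then have "Suc j < n" "n - Suc j - 1 = M - 1" using M_def by auto
        then show ?thesis using Suc.IH[of "Suc j"] False e_def Z_def by simp
      qed
      have A1: "coeff (cc n (Suc j)) 0 = fps_nth (hf (Rg 1 (Suc j))) M"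
        using A_form[of n "Suc j"] True M_def by simp
      have G: "Gc (Suc j) = of_nat (j - 1) * qv ^ (j - 1)" by (simp add: Gc_def)
      have "(\<Sum>i=1..Suc j. Gc i * fps_nth (hf (qv ^ i # Rg 1 (Suc j))) M)
          = (\<Sum>i=1..j. Gc i * fps_nth (hf (qv ^ i # Rg 1 (Suc j))) M)
            + Gc (Suc j) * fps_nth (hf (qv ^ Suc j # Rg 1 (Suc j))) M"
        by simp
      also have "\<dots> = (\<Sum>i=1..j. Gc i * fps_nth (hf (qv ^ i # Rg 1 j)) M) + e * (\<Sum>i=1..j. Gc i * Z i)
            + Gc (Suc j) * fps_nth (hf (Rg 1 (Suc j))) M + e * (Gc (Suc j) * Z (Suc j))"
        unfolding T1 T2 by (simp add: algebra_simps sum.distrib sum_distrib_left)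
      also have "\<dots> = coeff (cc n j) 1 + qv ^ Suc j * coeff (cc n (Suc j)) 1
          + of_nat (j - 1) * qv ^ (j - 1) * coeff (cc n (Suc j)) 0"
        unfolding B1 B2 A1 by (simp add: G algebra_simps)
      also have "\<dots> = coeff (cc (Suc n) k) 1" using cc_coeff1 \<open>k = Suc j\<close> by simp
      finally show ?thesis using \<open>k = Suc j\<close> True M_def by simp
    qed
  qed
qed

lemma part1: assumes "1 \<le> k" "k \<le> n"
  shows "coeff (Sf n k) 0 = qv ^ (n - k) * qbinom (n - 1) (k - 1)"
proof -
  have k: "k = Suc (k - 1)" using assms by simp
  have "coeff (Sf n k) 0 = fps_nth (hf (Rg 1 (Suc (k - 1)))) (n - k)"
    using A_form[of n k] assms Sf_cc k by simp
  also have "\<dots> = qv ^ (n - k) * gb (n - k + (k - 1)) (k - 1)" by (simp add: hf_Rg del: hf.simps Rg.simps)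
  also have "n - k + (k - 1) = n - 1" using assms by simp
  finally show ?thesis using qbinom_gb[of "k - 1" "n - 1"] assms by simp
qed

lemma mult_rearr: "(a::'a::comm_semiring_1) * c = d * e \<Longrightarrow> a * x * (c * y) = d * (e * x * y)"
proof -
  assume h: "a * c = d * e"
  have "a * x * (c * y) = (a * c) * (x * y)" by (simp add: mult_ac)
  also have "\<dots> = (d * e) * (x * y)" using h by simp
  also have "\<dots> = d * (e * x * y)" by (simp add: mult_ac)
  finally show ?thesis .
qed

lemma term_s: assumes "1 \<le> s" "s \<le> k - 2" "3 \<le> k" "k < n"
  shows "Gc (s + 2) * fps_nth (hf (qv ^ (s + 2) # Rg 1 k)) (n - k - 1) = qv ^ (n - k) * (of_nat s * qv ^ (s - 1) *
     (\<Sum>i = 0..n - k - 1. qv ^ (i * (s + 1)) * qbinom (i + k - s - 2) i * qbinom (s + n - k - i) (s + 1)))"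
proof -
  define N where "N = n - k - 1"
  define r where "r = k - s - 2"
  have kk: "k = (s + 1) + Suc r" using assms r_def by simp
  have "Rg 1 k = Rg (s + 2) (Suc r) @ Rg 1 (s + 1)"
    unfolding kk Rg_add by simp
  then have hrg: "hf (qv ^ (s + 2) # Rg 1 k) = hf (Rg (s + 2) (Suc r)) * hf (Rg 1 (Suc (Suc s)))"
    by (simp add: hf_append mult_ac)
  have X: "fps_nth (hf (qv ^ (s + 2) # Rg 1 k)) N
     = (\<Sum>i = 0..N. qv ^ ((s + 2) * i) * gb (i + r) r * (qv ^ (1 * (N - i)) * gb (N - i + Suc s) (Suc s)))"
    unfolding hrg fps_mult_nth by (simp only: hf_Rg)
  have Y: "qv ^ ((s + 2) * i) * gb (i + r) r * (qv ^ (1 * (N - i)) * gb (N - i + Suc s) (Suc s))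
      = qv ^ N * (qv ^ (i * (s + 1)) * qbinom (i + k - s - 2) i * qbinom (s + n - k - i) (s + 1))"
    if "i \<in> {0..N}" for i
  proof -
    have iN: "i \<le> N" using that by simp
    have q1: "qbinom (i + k - s - 2) i = gb (i + r) r"
      using qbinom_gb[of i "i + k - s - 2"] gb_sym[of i r] r_def assms by simp
    have q2: "qbinom (s + n - k - i) (s + 1) = gb (N - i + Suc s) (Suc s)"
    proof -
      have "s + n - k - i = N - i + Suc s" using iN N_def assms by simp
      then show ?thesis using qbinom_gb[of "s + 1" "s + n - k - i"] by simp
    qed
    have pw: "(s + 2) * i + (N - i) = N + i * (s + 1)" using iN by (simp add: algebra_simps)
    have "qv ^ ((s + 2) * i) * qv ^ (1 * (N - i)) = qv ^ N * qv ^ (i * (s + 1))"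
      by (simp only: mult_1 flip: power_add pw)
    then show ?thesis unfolding q1 q2 by (rule mult_rearr)
  qed
  have "fps_nth (hf (qv ^ (s + 2) # Rg 1 k)) N = qv ^ N *
     (\<Sum>i = 0..N. qv ^ (i * (s + 1)) * qbinom (i + k - s - 2) i * qbinom (s + n - k - i) (s + 1))"
    unfolding X sum_distrib_left by (rule sum.cong[OF refl], rule Y)
  moreover have "Gc (s + 2) = of_nat s * qv ^ s" by (simp add: Gc_def)
  moreover have "qv ^ s * qv ^ N = qv ^ (n - k) * qv ^ (s - 1)"
  proof -
    have "s + N = (n - k) + (s - 1)" using assms N_def by simp
    then show ?thesis by (simp flip: power_add)
  qed
  ultimately show ?thesis unfolding N_def[symmetric] by (simp add: algebra_simps)
qed

lemma part2: assumes "3 \<le> k" "k < n"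
  shows "coeff (Sf n k) 1 = qv ^ (n - k) *
              (\<Sum>s = 1..k - 2. of_nat s * qv ^ (s - 1) *
                 (\<Sum>i = 0..n - k - 1. qv ^ (i * (s + 1)) *
                    qbinom (i + k - s - 2) i * qbinom (s + n - k - i) (s + 1)))"
proof -
  define f where "f j = Gc j * fps_nth (hf (qv ^ j # Rg 1 k)) (n - k - 1)" for j
  have "coeff (Sf n k) 1 = (\<Sum>j=1..k. f j)" using B_form[of n k] assms Sf_cc f_def by simp
  also have "\<dots> = f 1 + (f 2 + (\<Sum>j=3..k. f j))"
    using assms by (simp add: sum.atLeast_Suc_atMost numeral_3_eq_3 numeral_2_eq_2)
  also have "f 1 = 0" "f 2 = 0" by (auto simp: f_def Gc_def)
  then have "f 1 + (f 2 + (\<Sum>j=3..k. f j)) = (\<Sum>j=3..k. f j)" by simp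
  also have "(\<Sum>j=3..k. f j) = (\<Sum>s=1..k-2. f (s + 2))"
  proof -
    have e: "{3..k} = {1 + 2..k - 2 + 2}" using assms by simp
    show ?thesis by (simp only: e sum.shift_bounds_cl_nat_ivl)
  qed
  also have "\<dots> = (\<Sum>s=1..k-2. qv ^ (n - k) * (of_nat s * qv ^ (s - 1) *
     (\<Sum>i = 0..n - k - 1. qv ^ (i * (s + 1)) * qbinom (i + k - s - 2) i * qbinom (s + n - k - i) (s + 1))))"
  proof (rule sum.cong[OF refl])
    fix s assume "s \<in> {1..k-2}"
    then show "f (s + 2) = qv ^ (n - k) * (of_nat s * qv ^ (s - 1) *
     (\<Sum>i = 0..n - k - 1. qv ^ (i * (s + 1)) * qbinom (i + k - s - 2) i * qbinom (s + n - k - i) (s + 1)))"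
      unfolding f_def using assms by (intro term_s) auto
  qed
  finally show ?thesis by (simp add: sum_distrib_left)
qed

theorem theorem11:
  shows "(\<forall>n k. 1 \<le> k \<and> k \<le> n \<longrightarrow>
            coeff (Sf n k) 0 = qv ^ (n - k) * qbinom (n - 1) (k - 1))
       \<and> (\<forall>n k. 3 \<le> k \<and> k < n \<longrightarrow>
            coeff (Sf n k) 1 = qv ^ (n - k) *
              (\<Sum>s = 1..k - 2. of_nat s * qv ^ (s - 1) *
                 (\<Sum>i = 0..n - k - 1. qv ^ (i * (s + 1)) *
                    qbinom (i + k - s - 2) i * qbinom (s + n - k - i) (s + 1))))"
  using part1 part2 by blast

end
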